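(* Let $S$ be a group and $A,B$ left $S$-acts without zero subacts. Then: (i) $A$ and $B\amalg z$ are not geometrically equivalent; (ii) $A$ and $B\amalg(z_1\amalg z_2)$ are not geometrically equivalent.
   Context: A left $S$-act is a nonempty set with an action $S\times A\to A$ satisfying $1a=a$, $(st)a=s(ta)$; homomorphisms preserve the action; $\amalg$ denotes coproduct (disjoint union). A zero $S$-act is a one-element $S$-act; $z,z_1,z_2$ denote zero $S$-acts. A zero subact is a one-element subact. For a nonempty finite set $X$, $F_X=\coprod_{x\in X}S_x$ is the free $S$-act on $X$. For an $S$-act $G$ and a relation $T\subseteq F_X\times F_X$, $T'_G=\{\mu:F_X\to G \text{ homomorphism}: T\subseteq\ker\mu\}$ and $T''_G=\bigcap_{\mu\in T'_G}\ker\mu$ (empty intersection $=F_X\times F_X$). $S$-acts $G_1,G_2$ are geometrically equivalent iff $T''_{G_1}=T''_{G_2}$ for all nonempty finite $X$ and all $T\subseteq F_X\times F_X$. *)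

theory Defs
  imports "HOL-Algebra.Group"
begin

definition s_act :: "('s,'m) monoid_scheme \<Rightarrow> 'b set \<Rightarrow> ('s \<Rightarrow> 'b \<Rightarrow> 'b) \<Rightarrow> bool" where
  "s_act S A act \<longleftrightarrow> A \<noteq> {}
     \<and> (\<forall>s\<in>carrier S. \<forall>a\<in>A. act s a \<in> A)
     \<and> (\<forall>a\<in>A. act \<one>\<^bsub>S\<^esub> a = a)
     \<and> (\<forall>s\<in>carrier S. \<forall>t\<in>carrier S. \<forall>a\<in>A. act (s \<otimes>\<^bsub>S\<^esub> t) a = act s (act t a))"

definition zero_act :: "('s,'m) monoid_scheme \<Rightarrow> 'b set \<Rightarrow> ('s \<Rightarrow> 'b \<Rightarrow> 'b) \<Rightarrow> bool" where
  "zero_act S Z act \<longleftrightarrow> s_act S Z act \<and> (\<exists>z. Z = {z})"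

definition has_zero_subact :: "('s,'m) monoid_scheme \<Rightarrow> 'b set \<Rightarrow> ('s \<Rightarrow> 'b \<Rightarrow> 'b) \<Rightarrow> bool" where
  "has_zero_subact S A act \<longleftrightarrow> (\<exists>a\<in>A. \<forall>s\<in>carrier S. act s a \<in> {a})"

definition coprod_carrier :: "'a set \<Rightarrow> 'b set \<Rightarrow> ('a + 'b) set" where
  "coprod_carrier A B = Inl ` A \<union> Inr ` B"

definition coprod_act :: "('s \<Rightarrow> 'a \<Rightarrow> 'a) \<Rightarrow> ('s \<Rightarrow> 'b \<Rightarrow> 'b) \<Rightarrow> 's \<Rightarrow> 'a + 'b \<Rightarrow> 'a + 'b" where
  "coprod_act actA actB s p = (case p of Inl a \<Rightarrow> Inl (actA s a) | Inr b \<Rightarrow> Inr (actB s b))"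

text \<open>Free S-act on X: the coproduct of copies S_x, i.e. X \<times> S with t(x,s) = (x, ts).\<close>
definition free_carrier :: "('s,'m) monoid_scheme \<Rightarrow> 'x set \<Rightarrow> ('x \<times> 's) set" where
  "free_carrier S X = X \<times> carrier S"

definition free_act :: "('s,'m) monoid_scheme \<Rightarrow> 's \<Rightarrow> 'x \<times> 's \<Rightarrow> 'x \<times> 's" where
  "free_act S t p = (fst p, t \<otimes>\<^bsub>S\<^esub> snd p)"

definition act_hom :: "('s,'m) monoid_scheme \<Rightarrow> 'a set \<Rightarrow> ('s \<Rightarrow> 'a \<Rightarrow> 'a)
    \<Rightarrow> 'b set \<Rightarrow> ('s \<Rightarrow> 'b \<Rightarrow> 'b) \<Rightarrow> ('a \<Rightarrow> 'b) \<Rightarrow> bool" where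
  "act_hom S A actA B actB f \<longleftrightarrow> (\<forall>a\<in>A. f a \<in> B)
     \<and> (\<forall>t\<in>carrier S. \<forall>a\<in>A. f (actA t a) = actB t (f a))"

definition act_ker :: "'a set \<Rightarrow> ('a \<Rightarrow> 'b) \<Rightarrow> ('a \<times> 'a) set" where
  "act_ker A f = {(p, q). p \<in> A \<and> q \<in> A \<and> f p = f q}"

definition T_prime :: "('s,'m) monoid_scheme \<Rightarrow> 'x set \<Rightarrow> 'g set \<Rightarrow> ('s \<Rightarrow> 'g \<Rightarrow> 'g)
    \<Rightarrow> (('x \<times> 's) \<times> ('x \<times> 's)) set \<Rightarrow> (('x \<times> 's) \<Rightarrow> 'g) set" where
  "T_prime S X G actG T = {\<mu>. act_hom S (free_carrier S X) (free_act S) G actG \<mu>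
                              \<and> T \<subseteq> act_ker (free_carrier S X) \<mu>}"

text \<open>T''_G: intersection of the kernels (empty intersection = F_X \<times> F_X).\<close>
definition T_dprime :: "('s,'m) monoid_scheme \<Rightarrow> 'x set \<Rightarrow> 'g set \<Rightarrow> ('s \<Rightarrow> 'g \<Rightarrow> 'g)
    \<Rightarrow> (('x \<times> 's) \<times> ('x \<times> 's)) set \<Rightarrow> (('x \<times> 's) \<times> ('x \<times> 's)) set" where
  "T_dprime S X G actG T = (free_carrier S X \<times> free_carrier S X)
      \<inter> (\<Inter>\<mu>\<in>T_prime S X G actG T. act_ker (free_carrier S X) \<mu>)"

text \<open>Geometric equivalence; finite sets X are taken as finite sets of naturals
  (only the cardinality of X matters).\<close>
definition geom_equiv :: "('s,'m) monoid_scheme \<Rightarrow> 'a set \<Rightarrow> ('s \<Rightarrow> 'a \<Rightarrow> 'a)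
    \<Rightarrow> 'b set \<Rightarrow> ('s \<Rightarrow> 'b \<Rightarrow> 'b) \<Rightarrow> bool" where
  "geom_equiv S G1 act1 G2 act2 \<longleftrightarrow>
    (\<forall>X :: nat set. finite X \<and> X \<noteq> {} \<longrightarrow>
      (\<forall>T. T \<subseteq> free_carrier S X \<times> free_carrier S X \<longrightarrow>
         T_dprime S X G1 act1 T = T_dprime S X G2 act2 T))"

end

theory Submission
  imports Defs
begin

lemma coprod_s_act:
  assumes "s_act S A a" "s_act S B b"
  shows "s_act S (coprod_carrier A B) (coprod_act a b)"
  using assms unfolding s_act_def coprod_carrier_def coprod_act_def by auto

lemma not_ge_general:
  fixes S :: "('s,'m) monoid_scheme" and A :: "'a set" and G :: "'g set"
  assumes grp: "group S"
    and sA: "s_act S A actA" and nz: "\<not> has_zero_subact S A actA"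
    and sG: "s_act S G actG"
    and gz: "gz \<in> G" "\<forall>s\<in>carrier S. actG s gz = gz"
    and gw: "gw \<in> G" "gw \<noteq> gz"
  shows "\<not> geom_equiv S A actA G actG"
proof
  assume ge: "geom_equiv S A actA G actG"
  have mon: "monoid S" using grp by (rule group.is_monoid)
  have one: "\<one>\<^bsub>S\<^esub> \<in> carrier S" using mon by (rule monoid.one_closed)
  define X :: "nat set" where "X = {0,1}"
  define T where "T = {((0::nat,\<one>\<^bsub>S\<^esub>),(0::nat,s)) | s. s \<in> carrier S}"
  have TF: "T \<subseteq> free_carrier S X \<times> free_carrier S X"
    using one unfolding T_def X_def free_carrier_def by auto
  have eq: "T_dprime S X A actA T = T_dprime S X G actG T"
    using ge TF unfolding geom_equiv_def X_def by auto
  define p where "p = ((0::nat,\<one>\<^bsub>S\<^esub>),(1::nat,\<one>\<^bsub>S\<^esub>))"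
  have pF: "p \<in> free_carrier S X \<times> free_carrier S X"
    using one unfolding p_def X_def free_carrier_def by auto
  have empty: "T_prime S X A actA T = {}"
  proof (rule ccontr)
    assume "T_prime S X A actA T \<noteq> {}"
    then obtain \<mu> where mu: "\<mu> \<in> T_prime S X A actA T" by blast
    have hom: "act_hom S (free_carrier S X) (free_act S) A actA \<mu>"
      and ker: "T \<subseteq> act_ker (free_carrier S X) \<mu>" using mu unfolding T_prime_def by auto
    have in0: "(0::nat, \<one>\<^bsub>S\<^esub>) \<in> free_carrier S X" using one unfolding X_def free_carrier_def by auto
    let ?a = "\<mu> (0, \<one>\<^bsub>S\<^esub>)"
    have aA: "?a \<in> A" using hom in0 unfolding act_hom_def by blast
    have "\<forall>s\<in>carrier S. actA s ?a \<in> {?a}"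
    proof
      fix s assume s: "s \<in> carrier S"
      have "actA s ?a = \<mu> (free_act S s (0, \<one>\<^bsub>S\<^esub>))"
        using hom in0 s unfolding act_hom_def by auto
      also have "\<dots> = \<mu> (0, s)" unfolding free_act_def using mon s by (simp add: monoid.r_one)
      also have "\<dots> = ?a" using ker s unfolding T_def act_ker_def by auto
      finally show "actA s ?a \<in> {?a}" by simp
    qed
    with aA nz show False unfolding has_zero_subact_def by blast
  qed
  have pA: "p \<in> T_dprime S X A actA T" using pF empty unfolding T_dprime_def by simp
  define \<mu> where "\<mu> = (\<lambda>(x::nat, s). if x = 0 then gz else actG s gw)"
  have hom: "act_hom S (free_carrier S X) (free_act S) G actG \<mu>"
    unfolding act_hom_def
  proof (intro conjI ballI)
    fix q assume "q \<in> free_carrier S X"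
    then show "\<mu> q \<in> G" using sG gz gw unfolding free_carrier_def s_act_def \<mu>_def by (auto split: if_splits)
  next
    fix t q assume t: "t \<in> carrier S" and q: "q \<in> free_carrier S X"
    then show "\<mu> (free_act S t q) = actG t (\<mu> q)"
      using sG gz gw unfolding free_carrier_def s_act_def \<mu>_def free_act_def by auto
  qed
  have ker: "T \<subseteq> act_ker (free_carrier S X) \<mu>"
    using one unfolding T_def act_ker_def \<mu>_def X_def free_carrier_def by auto
  have muT: "\<mu> \<in> T_prime S X G actG T" using hom ker unfolding T_prime_def by auto
  have "\<mu> (1, \<one>\<^bsub>S\<^esub>) = gw" using sG gw unfolding \<mu>_def s_act_def by auto
  then have "p \<notin> act_ker (free_carrier S X) \<mu>"
    using gw unfolding p_def act_ker_def \<mu>_def by auto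
  then have "p \<notin> T_dprime S X G actG T" using muT unfolding T_dprime_def by blast
  with pA eq show False by simp
qed

theorem proposition3p17:
  fixes S :: "('s,'m) monoid_scheme"
    and A :: "'a set" and actA :: "'s \<Rightarrow> 'a \<Rightarrow> 'a"
    and B :: "'b set" and actB :: "'s \<Rightarrow> 'b \<Rightarrow> 'b"
    and Z :: "'z set" and actZ :: "'s \<Rightarrow> 'z \<Rightarrow> 'z"
    and Z1 :: "'c set" and actZ1 :: "'s \<Rightarrow> 'c \<Rightarrow> 'c"
    and Z2 :: "'d set" and actZ2 :: "'s \<Rightarrow> 'd \<Rightarrow> 'd"
  assumes "group S"
    and "s_act S A actA" and "\<not> has_zero_subact S A actA"
    and "s_act S B actB" and "\<not> has_zero_subact S B actB"
    and "zero_act S Z actZ" and "zero_act S Z1 actZ1" and "zero_act S Z2 actZ2"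
  shows "\<not> geom_equiv S A actA (coprod_carrier B Z) (coprod_act actB actZ)
       \<and> \<not> geom_equiv S A actA (coprod_carrier B (coprod_carrier Z1 Z2))
             (coprod_act actB (coprod_act actZ1 actZ2))"
proof
  obtain b where b: "b \<in> B" using assms(4) unfolding s_act_def by blast
  obtain zz where zz: "Z = {zz}" using assms(6) unfolding zero_act_def by blast
  obtain z1 where z1: "Z1 = {z1}" using assms(7) unfolding zero_act_def by blast
  have sZ: "s_act S Z actZ" "s_act S Z1 actZ1" "s_act S Z2 actZ2"
    using assms(6-8) unfolding zero_act_def by auto
  show "\<not> geom_equiv S A actA (coprod_carrier B Z) (coprod_act actB actZ)"
    apply (rule not_ge_general[where gz = "Inr zz" and gw = "Inl b"])
    using assms(1-3) coprod_s_act[OF assms(4) sZ(1)] b zz sZ(1)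
    unfolding coprod_carrier_def coprod_act_def s_act_def by auto
  show "\<not> geom_equiv S A actA (coprod_carrier B (coprod_carrier Z1 Z2))
             (coprod_act actB (coprod_act actZ1 actZ2))"
    apply (rule not_ge_general[where gz = "Inr (Inl z1)" and gw = "Inl b"])
    using assms(1-3) coprod_s_act[OF assms(4) coprod_s_act[OF sZ(2) sZ(3)]] b z1 sZ(2)
    unfolding coprod_carrier_def coprod_act_def s_act_def by auto
qed

end
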